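(* Let $N\ge2$, let $\mathbf{K}\in\mathbb{R}^{N\times N}$ be the cyclic shift matrix ($(\mathbf{K}\mathbf{x})_1=x_N$, $(\mathbf{K}\mathbf{x})_i=x_{i-1}$ for $i\ge2$), $\mathbf{K}(\nu)=(1-\nu)\mathbf{I}+\nu\mathbf{K}$, and for $\tilde\nu\in\mathbb{R}$ let $\mathcal{K}(\tilde\nu)=\mathbf{K}^{\lfloor\tilde\nu\rfloor}\mathbf{K}(\tilde\nu-\lfloor\tilde\nu\rfloor)$ (with $\mathbf{K}^{-1}=\mathbf{K}^T$). Let $\mathbf{a},\mathbf{b}\in\mathbb{R}^N$, both not parallel to $\mathbf{1}=(1,\dots,1)^T$. Define $g:\mathbb{R}\to\mathbb{R}^N$ by $g(\tilde\nu)=\mathbf{b}-\mathcal{K}(\tilde\nu)^T\mathbf{a}$, and let $L$ be the period of $g$, i.e. the smallest $L>0$ with $g(x+L)=g(x)$ for all $x\in\mathbb{R}$. Then $$L=\frac{N}{\gcd\big[\operatorname{supp}\mathcal{F}(\mathbf{a})\setminus\{0\}\big]},$$ where $\mathcal{F}(\mathbf{a})$ is the discrete Fourier transform of $\mathbf{a}$, $\operatorname{supp}\mathcal{F}(\mathbf{a})\subseteq\{0,1,\dots,N-1\}$ is the set of frequency indices $k$ with $\mathcal{F}(\mathbf{a})_k\neq0$, and $\gcd$ denotes the greatest common divisor of that set of integers. *)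

theory Defs
  imports Complex_Main "Jordan_Normal_Form.Matrix"
begin

text \<open>Indices are 0-based: entries 0..N-1 correspond to the paper's 1..N.\<close>

definition shiftK :: "nat \<Rightarrow> real mat" where
  "shiftK N = mat N N (\<lambda>(i,j). if j = (i + N - 1) mod N then 1 else 0)"

definition Knu :: "nat \<Rightarrow> real \<Rightarrow> real mat" where
  "Knu N nu = (1 - nu) \<cdot>\<^sub>m 1\<^sub>m N + nu \<cdot>\<^sub>m shiftK N"

definition Kpow_int :: "nat \<Rightarrow> int \<Rightarrow> real mat" where
  "Kpow_int N m = (if m \<ge> 0 then shiftK N ^\<^sub>m nat m
                   else transpose_mat (shiftK N) ^\<^sub>m nat (- m))"

definition calK :: "nat \<Rightarrow> real \<Rightarrow> real mat" where
  "calK N nu = Kpow_int N \<lfloor>nu\<rfloor> * Knu N (nu - of_int \<lfloor>nu\<rfloor>)"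

definition gfun :: "nat \<Rightarrow> real vec \<Rightarrow> real vec \<Rightarrow> real \<Rightarrow> real vec" where
  "gfun N a b nu = b - transpose_mat (calK N nu) *\<^sub>v a"

definition DFT :: "nat \<Rightarrow> real vec \<Rightarrow> nat \<Rightarrow> complex" where
  "DFT N a k = (\<Sum>n<N. complex_of_real (a $ n) *
                 exp (- 2 * of_real pi * \<i> * of_nat k * of_nat n / of_nat N))"

definition supp_DFT :: "nat \<Rightarrow> real vec \<Rightarrow> nat set" where
  "supp_DFT N a = {k. k < N \<and> DFT N a k \<noteq> 0}"

definition least_period :: "(real \<Rightarrow> 'b) \<Rightarrow> real \<Rightarrow> bool" where
  "least_period g L \<longleftrightarrow> L > 0 \<and> (\<forall>x. g (x + L) = g x) \<and>
     (\<forall>L'. L' > 0 \<and> (\<forall>x. g (x + L') = g x) \<longrightarrow> L \<le> L')"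

definition parallel_to_ones :: "nat \<Rightarrow> real vec \<Rightarrow> bool" where
  "parallel_to_ones N a \<longleftrightarrow> (\<exists>c. a = c \<cdot>\<^sub>v vec N (\<lambda>_. 1))"

end

theory Submission
  imports Defs
begin


definition Vv :: "nat \<Rightarrow> (int \<Rightarrow> real) \<Rightarrow> real vec" where
  "Vv N f = vec N (\<lambda>i. f (int i))"

definition perN :: "nat \<Rightarrow> (int \<Rightarrow> 'b) \<Rightarrow> bool" where
  "perN N f \<longleftrightarrow> (\<forall>j. f (j + int N) = f j)"

lemma perN_nat: "perN N f \<Longrightarrow> f (j + int k * int N) = f j"
proof (induction k arbitrary: j)
  case 0 then show ?case by simp
next
  case (Suc k)
  have "f (j + int (Suc k) * int N) = f ((j + int k * int N) + int N)" by (simp add: algebra_simps)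
  also have "\<dots> = f (j + int k * int N)" using Suc.prems unfolding perN_def by blast
  finally show ?case using Suc by simp
qed

lemma perN_int: "perN N f \<Longrightarrow> f (j + q * int N) = f j"
proof (cases "q \<ge> 0")
  case True
  assume p: "perN N f"
  from perN_nat[OF p, of j "nat q"] True show ?thesis by simp
next
  case False
  assume p: "perN N f"
  from perN_nat[OF p, of "j + q * int N" "nat (-q)"] False show ?thesis by (simp add: algebra_simps)
qed

lemma perN_mod: "perN N f \<Longrightarrow> f (j mod int N) = f j"
  using perN_int[of N f "j mod int N" "j div int N"] by (simp add: mod_div_mult_eq)

lemma shiftK_carrier[simp]: "shiftK N \<in> carrier_mat N N"
  unfolding shiftK_def by simp

lemma idx_cond: fixes i j N :: nat assumes i: "i < N" and j: "j < N"
  shows "(i = (j + N - Suc 0) mod N) \<longleftrightarrow> (j = Suc i mod N)"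
proof -
  have A: "(j + N - Suc 0) mod N = (if j = 0 then N - 1 else j - 1)"
  proof (cases "j = 0")
    case True then show ?thesis using j by simp
  next
    case False
    then have "j + N - Suc 0 = (j - 1) + N" by simp
    then have "(j + N - Suc 0) mod N = (j - 1) mod N" by simp
    then show ?thesis using False j by simp
  qed
  have B: "Suc i mod N = (if Suc i = N then 0 else Suc i)"
    using i by (simp add: Suc_lessI)
  show ?thesis unfolding A B using i j by auto
qed

lemma KT_V: assumes N: "N > 0" and p: "perN N f"
  shows "transpose_mat (shiftK N) *\<^sub>v Vv N f = Vv N (\<lambda>j. f (j + 1))"
proof (rule eq_vecI)
  show "dim_vec (transpose_mat (shiftK N) *\<^sub>v Vv N f) = dim_vec (Vv N (\<lambda>j. f (j + 1)))"
    by (simp add: Vv_def shiftK_def)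
  fix i assume "i < dim_vec (Vv N (\<lambda>j. f (j + 1)))"
  then have i: "i < N" by (simp add: Vv_def)
  have "(transpose_mat (shiftK N) *\<^sub>v Vv N f) $ i
     = (\<Sum>j\<in>{0..<N}. (if i = (j + N - Suc 0) mod N then 1 else 0) * f (int j))"
    using i by (simp add: scalar_prod_def shiftK_def Vv_def)
  also have "\<dots> = (\<Sum>j\<in>{0..<N}. (if j = Suc i mod N then f (int j) else 0))"
    by (rule sum.cong) (auto simp: idx_cond[OF i])
  also have "\<dots> = f (int (Suc i mod N))" using N by (simp add: sum.delta)
  also have "\<dots> = f (int i + 1)" using perN_mod[OF p, of "int i + 1"] by (simp add: zmod_int add.commute)
  finally show "(transpose_mat (shiftK N) *\<^sub>v Vv N f) $ i = Vv N (\<lambda>j. f (j + 1)) $ i"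
    using i by (simp add: Vv_def)
qed

lemma K_V: assumes N: "N > 0" and p: "perN N f"
  shows "shiftK N *\<^sub>v Vv N f = Vv N (\<lambda>j. f (j - 1))"
proof (rule eq_vecI)
  show "dim_vec (shiftK N *\<^sub>v Vv N f) = dim_vec (Vv N (\<lambda>j. f (j - 1)))"
    by (simp add: Vv_def shiftK_def)
  fix i assume "i < dim_vec (Vv N (\<lambda>j. f (j - 1)))"
  then have i: "i < N" by (simp add: Vv_def)
  have "(shiftK N *\<^sub>v Vv N f) $ i
     = (\<Sum>j\<in>{0..<N}. (if j = (i + N - Suc 0) mod N then 1 else 0) * f (int j))"
    using i by (simp add: scalar_prod_def shiftK_def Vv_def)
  also have "\<dots> = (\<Sum>j\<in>{0..<N}. (if j = (i + N - Suc 0) mod N then f (int j) else 0))"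
    by (rule sum.cong) auto
  also have "\<dots> = f (int ((i + N - Suc 0) mod N))" using N by (simp add: sum.delta)
  also have "\<dots> = f (int i - 1 + int N)"
    using perN_mod[OF p, of "int i - 1 + int N"] N by (simp add: zmod_int of_nat_diff algebra_simps)
  also have "\<dots> = f (int i - 1)" using p unfolding perN_def by blast
  finally show "(shiftK N *\<^sub>v Vv N f) $ i = Vv N (\<lambda>j. f (j - 1)) $ i"
    using i by (simp add: Vv_def)
qed


lemma dim_shiftK[simp]: "dim_row (shiftK N) = N" "dim_col (shiftK N) = N"
  by (simp_all add: shiftK_def)

lemma dim_Vv[simp]: "dim_vec (Vv N f) = N" by (simp add: Vv_def)

lemma Vv_carrier[simp]: "Vv N f \<in> carrier_vec N" by (simp add: Vv_def)

lemma perN_shift: "perN N f \<Longrightarrow> perN N (\<lambda>j. f (j + c))"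
  unfolding perN_def by (metis add.commute add.left_commute)

lemma smult_mat_vec: "dim_vec v = dim_col A \<Longrightarrow> (c \<cdot>\<^sub>m A) *\<^sub>v v = c \<cdot>\<^sub>v (A *\<^sub>v (v :: real vec))"
  by (intro eq_vecI) auto

lemma KTpow_V: assumes N: "N > 0" shows "perN N f \<Longrightarrow>
  (transpose_mat (shiftK N) ^\<^sub>m n) *\<^sub>v Vv N f = Vv N (\<lambda>j. f (j + int n))"
proof (induction n arbitrary: f)
  case 0 then show ?case by (simp add: shiftK_def)
next
  case (Suc n)
  have c: "transpose_mat (shiftK N) \<in> carrier_mat N N" by simp
  have "(transpose_mat (shiftK N) ^\<^sub>m Suc n) *\<^sub>v Vv N f
     = (transpose_mat (shiftK N) ^\<^sub>m n) *\<^sub>v (transpose_mat (shiftK N) *\<^sub>v Vv N f)"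
    using c by (simp add: assoc_mult_mat_vec[of _ N N _ N] del: transpose_carrier_mat)
  also have "\<dots> = (transpose_mat (shiftK N) ^\<^sub>m n) *\<^sub>v Vv N (\<lambda>j. f (j + 1))"
    using KT_V[OF N Suc.prems] by simp
  also have "\<dots> = Vv N (\<lambda>j. f (j + int n + 1))"
    using Suc.IH[OF perN_shift[OF Suc.prems, of 1]] by (simp add: algebra_simps)
  finally show ?case by (simp add: algebra_simps)
qed

lemma trKpow_V: assumes N: "N > 0" shows "perN N f \<Longrightarrow>
  transpose_mat (shiftK N ^\<^sub>m n) *\<^sub>v Vv N f = Vv N (\<lambda>j. f (j + int n))"
proof (induction n arbitrary: f)
  case 0 then show ?case by (simp add: shiftK_def)
next
  case (Suc n)
  have c: "shiftK N \<in> carrier_mat N N" by simp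
  have tr: "transpose_mat (shiftK N ^\<^sub>m Suc n) = transpose_mat (shiftK N) * transpose_mat (shiftK N ^\<^sub>m n)"
    using c by (simp add: transpose_mult[of _ N N _ N])
  then have "transpose_mat (shiftK N ^\<^sub>m Suc n) *\<^sub>v Vv N f
     = transpose_mat (shiftK N) *\<^sub>v (transpose_mat (shiftK N ^\<^sub>m n) *\<^sub>v Vv N f)"
  proof -
    have c2: "transpose_mat (shiftK N ^\<^sub>m n) \<in> carrier_mat N N" using c by simp
    show ?thesis unfolding tr using c c2 by (simp add: assoc_mult_mat_vec[of _ N N _ N])
  qed
  also have "\<dots> = transpose_mat (shiftK N) *\<^sub>v Vv N (\<lambda>j. f (j + int n))"
    using Suc.IH[OF Suc.prems] by simp
  also have "\<dots> = Vv N (\<lambda>j. f (j + int n + 1))"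
    using KT_V[OF N perN_shift[OF Suc.prems, of "int n"]] by (simp add: algebra_simps)
  finally show ?case by (simp add: algebra_simps)
qed

lemma trKTpow_V: assumes N: "N > 0" shows "perN N f \<Longrightarrow>
  transpose_mat (transpose_mat (shiftK N) ^\<^sub>m n) *\<^sub>v Vv N f = Vv N (\<lambda>j. f (j - int n))"
proof (induction n arbitrary: f)
  case 0 then show ?case by (simp add: shiftK_def)
next
  case (Suc n)
  have c: "transpose_mat (shiftK N) \<in> carrier_mat N N" by simp
  have tr: "transpose_mat (transpose_mat (shiftK N) ^\<^sub>m Suc n)
      = shiftK N * transpose_mat (transpose_mat (shiftK N) ^\<^sub>m n)"
    using c by (simp add: transpose_mult[of _ N N _ N] del: transpose_carrier_mat)
  then have "transpose_mat (transpose_mat (shiftK N) ^\<^sub>m Suc n) *\<^sub>v Vv N f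
     = shiftK N *\<^sub>v (transpose_mat (transpose_mat (shiftK N) ^\<^sub>m n) *\<^sub>v Vv N f)"
  proof -
    have c2: "transpose_mat (transpose_mat (shiftK N) ^\<^sub>m n) \<in> carrier_mat N N" using c
      by (simp only: transpose_carrier_mat pow_carrier_mat)
    show ?thesis unfolding tr using c c2 by (simp add: assoc_mult_mat_vec[of _ N N _ N])
  qed
  also have "\<dots> = shiftK N *\<^sub>v Vv N (\<lambda>j. f (j - int n))"
    using Suc.IH[OF Suc.prems] by simp
  also have "\<dots> = Vv N (\<lambda>j. f (j - int n - 1))"
    using K_V[OF N perN_shift[OF Suc.prems, of "- int n"]] by (simp add: algebra_simps)
  finally show ?case by (simp add: algebra_simps)
qed

lemma Kpow_carrier[simp]: "Kpow_int N m \<in> carrier_mat N N"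
  unfolding Kpow_int_def by simp

lemma Kpow_V: assumes N: "N > 0" and p: "perN N f"
  shows "transpose_mat (Kpow_int N m) *\<^sub>v Vv N f = Vv N (\<lambda>j. f (j + m))"
proof (cases "m \<ge> 0")
  case True then show ?thesis using trKpow_V[OF N p, of "nat m"] by (simp add: Kpow_int_def)
next
  case False then show ?thesis using trKTpow_V[OF N p, of "nat (- m)"] by (simp add: Kpow_int_def)
qed

lemma Knu_carrier[simp]: "Knu N t \<in> carrier_mat N N"
  unfolding Knu_def by simp

lemma Knu_V: assumes N: "N > 0" and p: "perN N f"
  shows "transpose_mat (Knu N t) *\<^sub>v Vv N f = Vv N (\<lambda>j. (1 - t) * f j + t * f (j + 1))"
proof -
  have tr: "transpose_mat (Knu N t) = (1 - t) \<cdot>\<^sub>m 1\<^sub>m N + t \<cdot>\<^sub>m transpose_mat (shiftK N)"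
    by (rule eq_matI) (auto simp: Knu_def shiftK_def)
  have "transpose_mat (Knu N t) *\<^sub>v Vv N f
      = ((1 - t) \<cdot>\<^sub>m 1\<^sub>m N) *\<^sub>v Vv N f + (t \<cdot>\<^sub>m transpose_mat (shiftK N)) *\<^sub>v Vv N f"
    unfolding tr by (rule add_mult_distrib_mat_vec[of _ N N]) auto
  also have "\<dots> = (1 - t) \<cdot>\<^sub>v Vv N f + t \<cdot>\<^sub>v Vv N (\<lambda>j. f (j + 1))"
    by (simp add: smult_mat_vec KT_V[OF N p])
  also have "\<dots> = Vv N (\<lambda>j. (1 - t) * f j + t * f (j + 1))"
    by (intro eq_vecI) (auto simp: Vv_def)
  finally show ?thesis .
qed

definition Aext :: "nat \<Rightarrow> real vec \<Rightarrow> int \<Rightarrow> real" where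
  "Aext N a j = a $ nat (j mod int N)"

definition Phi :: "(int \<Rightarrow> real) \<Rightarrow> real \<Rightarrow> real" where
  "Phi A x = (1 - (x - of_int \<lfloor>x\<rfloor>)) * A \<lfloor>x\<rfloor> + (x - of_int \<lfloor>x\<rfloor>) * A (\<lfloor>x\<rfloor> + 1)"

lemma perN_Aext: "N > 0 \<Longrightarrow> perN N (Aext N a)"
  unfolding perN_def Aext_def by simp

lemma Vv_Aext: "N > 0 \<Longrightarrow> a \<in> carrier_vec N \<Longrightarrow> Vv N (Aext N a) = a"
  by (intro eq_vecI) (auto simp: Vv_def Aext_def zmod_int)

lemma gfun_eq: assumes N: "N > 0" and a: "a \<in> carrier_vec N" and b: "b \<in> carrier_vec N"
  shows "gfun N a b x = vec N (\<lambda>i. b $ i - Phi (Aext N a) (of_nat i + x))"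
proof -
  let ?m = "\<lfloor>x\<rfloor>" and ?t = "x - of_int \<lfloor>x\<rfloor>" and ?A = "Aext N a"
  have p: "perN N ?A" using perN_Aext[OF N] .
  have "transpose_mat (calK N x) = transpose_mat (Knu N ?t) * transpose_mat (Kpow_int N ?m)"
    unfolding calK_def by (rule transpose_mult[of _ N N _ N]) auto
  then have "transpose_mat (calK N x) *\<^sub>v a = transpose_mat (Knu N ?t) *\<^sub>v (transpose_mat (Kpow_int N ?m) *\<^sub>v Vv N ?A)"
    using Vv_Aext[OF N a] a
    by (simp add: assoc_mult_mat_vec[of _ N N _ N])
  also have "\<dots> = transpose_mat (Knu N ?t) *\<^sub>v Vv N (\<lambda>j. ?A (j + ?m))"
    using Kpow_V[OF N p] by simp
  also have "\<dots> = Vv N (\<lambda>j. (1 - ?t) * ?A (j + ?m) + ?t * ?A (j + 1 + ?m))"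
    using Knu_V[OF N perN_shift[OF p, of ?m]] by simp
  also have "\<dots> = vec N (\<lambda>i. Phi ?A (of_nat i + x))"
  proof (intro eq_vecI)
    fix i assume "i < dim_vec (vec N (\<lambda>i. Phi ?A (of_nat i + x)))"
    then have i: "i < N" by simp
    have fl: "\<lfloor>of_nat i + x\<rfloor> = int i + ?m" by (metis add.commute floor_add_int of_int_of_nat_eq)
    show "Vv N (\<lambda>j. (1 - ?t) * ?A (j + ?m) + ?t * ?A (j + 1 + ?m)) $ i = vec N (\<lambda>i. Phi ?A (of_nat i + x)) $ i"
      using i unfolding Vv_def Phi_def fl by (simp add: add_ac)
  qed simp
  finally show ?thesis unfolding gfun_def using b by (intro eq_vecI) auto
qed



lemma phi_at: assumes "0 \<le> t" "t \<le> 1"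
  shows "Phi A (of_int j + t) = (1 - t) * A j + t * A (j + 1)"
proof (cases "t = 1")
  case True
  have "of_int j + t = of_int (j + 1)" using True by simp
  then show ?thesis using True unfolding Phi_def by simp
next
  case False
  then have fl: "\<lfloor>of_int j + t\<rfloor> = j" using assms by linarith
  show ?thesis unfolding Phi_def fl by simp
qed

lemma phi_int: "Phi A (of_int j) = A j"
  using phi_at[of 0 A j] by simp

lemma phi_int_period: assumes "\<forall>j. A (j + p) = A j"
  shows "Phi A (x + of_int p) = Phi A x"
proof -
  have fl: "\<lfloor>x + of_int p\<rfloor> = \<lfloor>x\<rfloor> + p" by simp
  have "A (\<lfloor>x\<rfloor> + p) = A \<lfloor>x\<rfloor>" "A (\<lfloor>x\<rfloor> + p + 1) = A (\<lfloor>x\<rfloor> + 1)"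
    using assms by (metis, metis add.commute add.left_commute)
  then show ?thesis unfolding Phi_def fl by simp
qed

lemma phi_nonint_period:
  assumes per: "\<forall>x. Phi A (x + L) = Phi A x" and nonint: "L \<noteq> of_int \<lfloor>L\<rfloor>"
    and pN: "perN N A" and N: "N > 0"
  shows "A j = A 0"
proof -
  define p where "p = \<lfloor>L\<rfloor>"
  define s where "s = L - of_int p"
  have s0: "0 < s" and s1: "s < 1" using nonint unfolding s_def p_def
    by (metis diff_gt_0_iff_gt floor_le_iff le_less of_int_floor_le, linarith)
  have L: "L = of_int p + s" by (simp add: s_def)
  have E1: "A (i - p) = (1 - s) * A i + s * A (i + 1)" for i
  proof -
    have eq: "of_int (i - p) + L = of_int i + s" unfolding L by simp
    have h: "Phi A (of_int i + s) = Phi A (of_int (i - p))"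
      using per[rule_format, of "of_int (i - p)"] unfolding eq .
    have a1: "Phi A (of_int (i - p)) = A (i - p)" by (rule phi_int)
    have a2: "Phi A (of_int i + s) = (1 - s) * A i + s * A (i + 1)" by (rule phi_at) (use s0 s1 in auto)
    show ?thesis using h a1 a2 by metis
  qed
  have E2: "s * A (i - p) + (1 - s) * A (i + 1 - p) = A (i + 1)" for i
  proof -
    have eq: "(of_int (i - p) + (1 - s)) + L = of_int (i + 1)" unfolding L by simp
    have h: "Phi A (of_int (i + 1)) = Phi A (of_int (i - p) + (1 - s))"
      using per[rule_format, of "of_int (i - p) + (1 - s)"] unfolding eq .
    have a1: "Phi A (of_int (i + 1)) = A (i + 1)" by (rule phi_int)
    have a2: "Phi A (of_int (i - p) + (1 - s)) = (1 - (1 - s)) * A (i - p) + (1 - s) * A (i - p + 1)"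
      by (rule phi_at) (use s0 s1 in auto)
    have a3: "i - p + 1 = i + 1 - p" by simp
    show ?thesis using h a1 a2 unfolding a3 by simp
  qed
  have D: "A (i + 2) - A (i + 1) = A (i + 1) - A i" for i
  proof -
    have e1: "A (i + 1 - p) = (1 - s) * A (i + 1) + s * A (i + 2)"
      using E1[of "i + 1"] by (simp add: algebra_simps)
    have "A (i + 1) = s * ((1 - s) * A i + s * A (i + 1)) + (1 - s) * ((1 - s) * A (i + 1) + s * A (i + 2))"
      using E2[of i] unfolding E1[of i] e1 by simp
    moreover have "s * (1 - s) * (A i - 2 * A (i + 1) + A (i + 2))
       = s * ((1 - s) * A i + s * A (i + 1)) + (1 - s) * ((1 - s) * A (i + 1) + s * A (i + 2)) - A (i + 1)"
      by (simp add: algebra_simps power2_eq_square)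
    ultimately have "s * (1 - s) * (A i - 2 * A (i + 1) + A (i + 2)) = 0" by simp
    moreover have "s * (1 - s) \<noteq> 0" using s0 s1 by simp
    ultimately show ?thesis by simp
  qed
  define d where "d = A 1 - A 0"
  have lin: "A (int n) = A 0 + real n * d" for n
  proof (induction n rule: nat_less_induct)
    case (1 n)
    show ?case
    proof (cases n)
      case 0 then show ?thesis by simp
    next
      case (Suc m)
      show ?thesis
      proof (cases m)
        case 0 then show ?thesis using Suc by (simp add: d_def)
      next
        case (Suc k)
        have "A (int k + 2) - A (int k + 1) = A (int k + 1) - A (int k)" using D[of "int k"] .
        moreover have "A (int k + 1) = A 0 + real (Suc k) * d" using 1[rule_format, of "Suc k"] \<open>n = Suc m\<close> Suc
          by (simp add: add.commute)
        moreover have "A (int k) = A 0 + real k * d" using 1[rule_format, of k] \<open>n = Suc m\<close> Suc by simp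
        ultimately have "A (int k + 2) = A 0 + real (Suc (Suc k)) * d" by (simp add: algebra_simps)
        then show ?thesis using \<open>n = Suc m\<close> Suc by (simp add: add.commute)
      qed
    qed
  qed
  have "A (0 + int N) = A 0" using pN unfolding perN_def by blast
  then have "real N * d = 0" using lin[of N] by simp
  then have d0: "d = 0" using N by simp
  have "A j = A (j mod int N)" using perN_mod[OF pN] by simp
  also have "\<dots> = A (int (nat (j mod int N)))" using N by simp
  also have "\<dots> = A 0" using lin[of "nat (j mod int N)"] d0 by simp
  finally show ?thesis .
qed



definition ee :: "nat \<Rightarrow> int \<Rightarrow> complex" where
  "ee N m = cis (2 * pi * of_int m / real N)"

lemma ee_add: "ee N (m + n) = ee N m * ee N n"
  unfolding ee_def cis_mult by (simp add: add_divide_distrib algebra_simps)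

lemma ee_0[simp]: "ee N 0 = 1" by (simp add: ee_def)

lemma ee_pow: "ee N m ^ k = ee N (int k * m)"
  unfolding ee_def DeMoivre by (simp add: algebra_simps)

lemma ee_eq_1: assumes N: "N > 0" shows "ee N m = 1 \<longleftrightarrow> int N dvd m"
proof
  assume h: "ee N m = 1"
  then have "cos (2 * pi * of_int m / real N) = 1"
    unfolding ee_def by (metis cis.sel(1) one_complex.sel(1))
  then obtain n :: int where n: "2 * pi * of_int m / real N = of_int n * 2 * pi"
    using cos_one_2pi_int by blast
  then have "of_int m = of_int n * real N" using N by (simp add: field_simps)
  then have "m = n * int N" by (metis of_int_eq_iff of_int_mult of_int_of_nat_eq)
  then show "int N dvd m" by simp
next
  assume "int N dvd m"
  then obtain q where q: "m = int N * q" by blast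
  have "2 * pi * of_int m / real N = 2 * pi * of_int q" using N unfolding q by simp
  then show "ee N m = 1" unfolding ee_def by simp
qed

lemma ee_N: "N > 0 \<Longrightarrow> ee N (m + int N * q) = ee N m"
  using ee_eq_1[of N "int N * q"] by (simp add: ee_add)

lemma cnj_ee: "cnj (ee N m) = ee N (- m)"
  unfolding ee_def cis_cnj by simp

definition FT :: "nat \<Rightarrow> (int \<Rightarrow> real) \<Rightarrow> nat \<Rightarrow> complex" where
  "FT N B k = (\<Sum>n<N. complex_of_real (B (int n)) * ee N (- (int k * int n)))"

lemma DFT_FT: assumes "N > 0" shows "DFT N a k = FT N (Aext N a) k"
  unfolding DFT_def FT_def
proof (rule sum.cong)
  fix n assume n: "n \<in> {..<N}"
  have "exp (- 2 * complex_of_real pi * \<i> * of_nat k * of_nat n / of_nat N)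
      = exp (\<i> * complex_of_real (2 * pi * of_int (- (int k * int n)) / real N))"
    by (rule arg_cong[where f = exp]) (simp add: field_simps)
  then show "complex_of_real (a $ n) * exp (- 2 * complex_of_real pi * \<i> * of_nat k * of_nat n / of_nat N) =
         complex_of_real (Aext N a (int n)) * ee N (- (int k * int n))"
    using n unfolding ee_def cis_conv_exp Aext_def by (simp add: zmod_int)
qed simp

lemma geo: assumes N: "N > 0" shows "(\<Sum>k<N. ee N (int k * m)) = (if int N dvd m then of_nat N else 0)"
proof (cases "int N dvd m")
  case True
  then have "ee N (int k * m) = 1" for k using ee_eq_1[OF N] by (simp)
  then show ?thesis using True by simp
next
  case False
  then have ne: "ee N m \<noteq> 1" using ee_eq_1[OF N] by simp
  have "(\<Sum>k<N. ee N (int k * m)) = (\<Sum>k<N. ee N m ^ k)" by (simp add: ee_pow)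
  also have "\<dots> = (ee N m ^ N - 1) / (ee N m - 1)" using geometric_sum[OF ne] .
  also have "ee N m ^ N = 1" unfolding ee_pow using ee_eq_1[OF N] by simp
  finally show ?thesis using False by simp
qed

lemma ee_diff: fixes k j n :: nat shows "ee N (int k * (int j - int n)) = ee N (- (int k * int n)) * ee N (int k * int j)"
proof -
  have "int k * (int j - int n) = - (int k * int n) + int k * int j" by (simp add: algebra_simps)
  then show ?thesis by (simp only: ee_add)
qed

lemma FT_mult: "FT N B k * ee N (int k * int j) = (\<Sum>n<N. complex_of_real (B (int n)) * ee N (int k * (int j - int n)))"
  unfolding FT_def sum_distrib_right by (rule sum.cong[OF refl]) (simp only: ee_diff mult.assoc)

lemma inversion: assumes N: "N > 0" and j: "j < N"
  shows "(\<Sum>k<N. FT N B k * ee N (int k * int j)) = of_nat N * complex_of_real (B (int j))"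
proof -
  have "(\<Sum>k<N. FT N B k * ee N (int k * int j))
      = (\<Sum>k<N. \<Sum>n<N. complex_of_real (B (int n)) * ee N (int k * (int j - int n)))"
    by (rule sum.cong[OF refl], rule FT_mult)
  also have "\<dots> = (\<Sum>n<N. \<Sum>k<N. complex_of_real (B (int n)) * ee N (int k * (int j - int n)))"
    by (rule sum.swap)
  also have "\<dots> = (\<Sum>n<N. complex_of_real (B (int n)) * (\<Sum>k<N. ee N (int k * (int j - int n))))"
    by (rule sum.cong[OF refl], rule sum_distrib_left[symmetric])
  also have "\<dots> = (\<Sum>n<N. if n = j then complex_of_real (B (int n)) * of_nat N else 0)"
  proof (intro sum.cong refl)
    fix n assume n: "n \<in> {..<N}"
    have "int N dvd (int j - int n) \<longleftrightarrow> n = j"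
    proof
      assume dv: "int N dvd (int j - int n)"
      have ab: "\<bar>int j - int n\<bar> < int N" using n j by auto
      have "int j - int n = 0"
      proof (rule ccontr)
        assume "int j - int n \<noteq> 0"
        then have "\<bar>int N\<bar> \<le> \<bar>int j - int n\<bar>" using dvd_imp_le_int dv by blast
        then show False using ab by simp
      qed
      then show "n = j" by simp
    qed simp
    then show "complex_of_real (B (int n)) * (\<Sum>k<N. ee N (int k * (int j - int n)))
        = (if n = j then complex_of_real (B (int n)) * of_nat N else 0)"
      using geo[OF N, of "int j - int n"] by simp
  qed
  also have "\<dots> = of_nat N * complex_of_real (B (int j))" using j by (simp add: sum.delta)
  finally show ?thesis .
qed

lemma sum_per_shift1: assumes h: "\<forall>n. h (n + int N) = (h n :: complex)"
  shows "(\<Sum>n<N. h (int n + 1)) = (\<Sum>n<N. h (int n))"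
proof -
  have "(\<Sum>n<Suc N. h (int n)) = h 0 + (\<Sum>n<N. h (int (Suc n)))" by (subst sum.lessThan_Suc_shift) simp
  moreover have "(\<Sum>n<Suc N. h (int n)) = (\<Sum>n<N. h (int n)) + h (int N)" by simp
  moreover have "h (int N) = h 0" using h[rule_format, of 0] by simp
  ultimately show ?thesis by (simp add: add.commute)
qed

lemma sum_per_shift: "\<forall>n. h (n + int N) = (h n :: complex) \<Longrightarrow>
   (\<Sum>n<N. h (int n + int p)) = (\<Sum>n<N. h (int n))"
proof (induction p arbitrary: h)
  case 0 then show ?case by simp
next
  case (Suc p)
  have "(\<Sum>n<N. h (int n + int (Suc p))) = (\<Sum>n<N. (\<lambda>m. h (m + 1)) (int n + int p))"
    by (simp add: algebra_simps)
  also have "\<dots> = (\<Sum>n<N. h (int n + 1))"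
    by (rule Suc.IH) (use Suc.prems in \<open>metis add.commute add.left_commute\<close>)
  also have "\<dots> = (\<Sum>n<N. h (int n))" by (rule sum_per_shift1) (use Suc.prems in auto)
  finally show ?case .
qed

lemma FT_shift: assumes N: "N > 0" and pN: "perN N B"
  shows "FT N (\<lambda>j. B (j + int p)) k = ee N (int k * int p) * FT N B k"
proof -
  define g where "g n = complex_of_real (B n) * ee N (- (int k * (n - int p)))" for n
  have gp: "\<forall>n. g (n + int N) = g n"
  proof
    fix n
    have "B (n + int N) = B n" using pN unfolding perN_def by blast
    moreover have "ee N (- (int k * (n + int N - int p))) = ee N (- (int k * (n - int p)))"
      using ee_N[OF N, of "- (int k * (n - int p))" "- int k"] by (simp add: algebra_simps)
    ultimately show "g (n + int N) = g n" unfolding g_def by (simp add: algebra_simps)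
  qed
  have "FT N (\<lambda>j. B (j + int p)) k = (\<Sum>n<N. g (int n + int p))"
    unfolding FT_def g_def by simp
  also have "\<dots> = (\<Sum>n<N. g (int n))" using sum_per_shift[OF gp] .
  also have "\<dots> = ee N (int k * int p) * FT N B k"
    unfolding FT_def g_def sum_distrib_left
    by (intro sum.cong refl) (simp add: ee_add[symmetric] algebra_simps)
  finally show ?thesis .
qed



definition SS :: "nat \<Rightarrow> (int \<Rightarrow> real) \<Rightarrow> nat set" where
  "SS N A = {k. 0 < k \<and> k < N \<and> FT N A k \<noteq> 0}"

lemma period_imp: assumes N: "N > 0" and pN: "perN N A" and per: "\<forall>j. A (j + int p) = A j"
    and k: "k \<in> SS N A"
  shows "N dvd k * p"
proof -
  have "(\<lambda>j. A (j + int p)) = A" using per by auto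
  then have "FT N A k = ee N (int k * int p) * FT N A k" using FT_shift[OF N pN, of p k] by simp
  moreover have "FT N A k \<noteq> 0" using k by (simp add: SS_def)
  ultimately have "ee N (int k * int p) = 1" by simp
  then have "int N dvd int k * int p" using ee_eq_1[OF N] by simp
  then show ?thesis by (metis of_nat_dvd_iff of_nat_mult)
qed

lemma imp_period: assumes N: "N > 0" and pN: "perN N A" and dv: "\<forall>k\<in>SS N A. N dvd k * p"
  shows "A (j + int p) = A j"
proof -
  have FTeq: "FT N (\<lambda>j. A (j + int p)) k = FT N A k" if k: "k < N" for k
  proof -
    have "ee N (int k * int p) * FT N A k = FT N A k"
    proof (cases "k = 0 \<or> FT N A k = 0")
      case True then show ?thesis by auto
    next
      case False
      then have "k \<in> SS N A" using k by (simp add: SS_def)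
      then have "N dvd k * p" using dv by blast
      then have "int N dvd int k * int p" by (metis of_nat_dvd_iff of_nat_mult)
      then show ?thesis using ee_eq_1[OF N] by simp
    qed
    then show ?thesis using FT_shift[OF N pN, of p k] by simp
  qed
  have base: "A (int i + int p) = A (int i)" if i: "i < N" for i
  proof -
    have "of_nat N * complex_of_real (A (int i + int p))
       = (\<Sum>k<N. FT N (\<lambda>j. A (j + int p)) k * ee N (int k * int i))"
      using inversion[OF N i, of "\<lambda>j. A (j + int p)"] by simp
    also have "\<dots> = (\<Sum>k<N. FT N A k * ee N (int k * int i))"
      by (rule sum.cong[OF refl]) (simp add: FTeq)
    also have "\<dots> = of_nat N * complex_of_real (A (int i))" using inversion[OF N i] .
    finally show ?thesis using N by simp
  qed
  define r where "r = j mod int N"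
  have r0: "0 \<le> r" "r < int N" using N by (simp_all add: r_def)
  have "A (j + int p) = A ((r + int p) + (j div int N) * int N)"
    by (simp add: r_def algebra_simps)
  also have "\<dots> = A (r + int p)" using perN_int[OF pN] .
  also have "\<dots> = A r" using base[of "nat r"] r0 by simp
  also have "\<dots> = A j" unfolding r_def using perN_mod[OF pN] .
  finally show ?thesis .
qed

lemma SS_nonempty: assumes N: "N > 0" and ne: "\<exists>j. A j \<noteq> A 0" and pN: "perN N A"
  shows "SS N A \<noteq> {}"
proof
  assume S: "SS N A = {}"
  have z: "FT N A k = 0" if "0 < k" "k < N" for k using S that by (auto simp: SS_def)
  have c0: "of_nat N * complex_of_real (A (int i)) = FT N A 0" if i: "i < N" for i
  proof -
    have "of_nat N * complex_of_real (A (int i)) = (\<Sum>k<N. FT N A k * ee N (int k * int i))"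
      using inversion[OF N i] by simp
    also have "\<dots> = (\<Sum>k<N. if k = 0 then FT N A 0 else 0)"
      by (rule sum.cong[OF refl]) (auto simp: z)
    also have "\<dots> = FT N A 0" using N by (simp add: sum.delta)
    finally show ?thesis .
  qed
  have c: "A (int i) = A 0" if i: "i < N" for i
  proof -
    have "complex_of_nat N * complex_of_real (A (int i)) = complex_of_nat N * complex_of_real (A 0)"
      using c0[OF i] c0[OF N] by simp
    then have "complex_of_real (A (int i)) = complex_of_real (A 0)" using N by simp
    then show ?thesis by simp
  qed
  obtain j where j: "A j \<noteq> A 0" using ne by blast
  have "A j = A (int (nat (j mod int N)))" using perN_mod[OF pN, of j] N by simp
  also have "\<dots> = A 0" using c[of "nat (j mod int N)"] N by (simp add: nat_less_iff)
  finally show False using j by simp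
qed

lemma SS_sym: assumes N: "N > 0" and k: "k \<in> SS N A" shows "N - k \<in> SS N A"
proof -
  have kN: "0 < k" "k < N" and F: "FT N A k \<noteq> 0" using k by (auto simp: SS_def)
  have "FT N A (N - k) = cnj (FT N A k)"
    unfolding FT_def cnj_sum
  proof (rule sum.cong[OF refl])
    fix n
    have "- (int (N - k) * int n) = int k * int n + int N * (- int n)"
      using kN by (simp add: of_nat_diff algebra_simps)
    then have "ee N (- (int (N - k) * int n)) = ee N (int k * int n)"
      using ee_N[OF N, of "int k * int n" "- int n"] by simp
    then show "complex_of_real (A (int n)) * ee N (- (int (N - k) * int n)) =
         cnj (complex_of_real (A (int n)) * ee N (- (int k * int n)))"
      by (simp add: cnj_ee)
  qed
  then have "FT N A (N - k) \<noteq> 0" using F by simp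
  then show ?thesis using kN by (simp add: SS_def)
qed

lemma SS_finite: "finite (SS N A)" unfolding SS_def by simp

lemma Gcd_props: assumes N: "N > 0" and ne: "SS N A \<noteq> {}"
  shows "Gcd (SS N A) > 0" "Gcd (SS N A) dvd N"
proof -
  have "\<not> SS N A \<subseteq> {0}" using ne by (auto simp: SS_def)
  then show "Gcd (SS N A) > 0" by (metis Gcd_0_iff bot_nat_0.not_eq_extremum)
  obtain k where k: "k \<in> SS N A" using ne by blast
  have "Gcd (SS N A) dvd k" "Gcd (SS N A) dvd (N - k)" using k SS_sym[OF N k] by (simp_all add: Gcd_dvd)
  then have "Gcd (SS N A) dvd (k + (N - k))" by (rule dvd_add)
  moreover have "k + (N - k) = N" using k by (simp add: SS_def)
  ultimately show "Gcd (SS N A) dvd N" by simp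
qed



theorem proposition4p1:
  fixes N :: nat and a b :: "real vec"
  assumes "N \<ge> 2"
    and "a \<in> carrier_vec N" and "b \<in> carrier_vec N"
    and "\<not> parallel_to_ones N a" and "\<not> parallel_to_ones N b"
  shows "least_period (gfun N a b)
           (real N / real (Gcd (supp_DFT N a - {0})))"
proof -
  have N: "N > 0" using assms(1) by simp
  have a: "a \<in> carrier_vec N" and b: "b \<in> carrier_vec N" using assms by auto
  define A where "A = Aext N a"
  have pN: "perN N A" unfolding A_def using perN_Aext[OF N] .
  have SSeq: "supp_DFT N a - {0} = SS N A"
    unfolding supp_DFT_def SS_def A_def using DFT_FT[OF N, of a] by auto
  have Ai: "A (int i) = a $ i" if "i < N" for i using that unfolding A_def Aext_def by (simp add: zmod_int)
  have nonconst: "\<exists>j. A j \<noteq> A 0"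
  proof (rule ccontr)
    assume "\<not> (\<exists>j. A j \<noteq> A 0)"
    then have c: "A j = A 0" for j by blast
    have "a = A 0 \<cdot>\<^sub>v vec N (\<lambda>_. 1)"
    proof (rule eq_vecI)
      fix i assume "i < dim_vec (A 0 \<cdot>\<^sub>v vec N (\<lambda>_. 1))"
      then have i: "i < N" by simp
      show "a $ i = (A 0 \<cdot>\<^sub>v vec N (\<lambda>_. 1)) $ i" using i Ai[OF i] c[of "int i"] by simp
    qed (use a in simp)
    then have "parallel_to_ones N a" unfolding parallel_to_ones_def by blast
    then show False using assms(4) by blast
  qed
  have ne: "SS N A \<noteq> {}" using SS_nonempty[OF N nonconst pN] .
  define G where "G = Gcd (SS N A)"
  have G0: "G > 0" and GN: "G dvd N" using Gcd_props[OF N ne] unfolding G_def by auto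
  define P where "P = N div G"
  have NGP: "N = G * P" unfolding P_def using GN by simp
  have P0: "P > 0" using NGP N by (cases P) auto
  have LP: "real N / real (Gcd (supp_DFT N a - {0})) = real P"
    unfolding SSeq G_def[symmetric] using NGP G0 by simp
  have gfun_eq': "gfun N a b x = vec N (\<lambda>i. b $ i - Phi A (of_nat i + x))" for x
    unfolding A_def by (rule gfun_eq[OF N a b])
  have perP: "\<forall>j. A (j + int P) = A j"
  proof
    fix j
    show "A (j + int P) = A j"
    proof (rule imp_period[OF N pN], rule ballI)
      fix k assume k: "k \<in> SS N A"
      then have "G dvd k" unfolding G_def by (simp add: Gcd_dvd)
      then obtain k' where "k = G * k'" by blast
      then have "k * P = k' * N" using NGP by simp
      then show "N dvd k * P" by simp
    qed
  qed
  show ?thesis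
    unfolding LP least_period_def
  proof (intro conjI allI impI)
    show "0 < real P" using P0 by simp
  next
    fix x
    show "gfun N a b (x + real P) = gfun N a b x"
      unfolding gfun_eq'
    proof (rule eq_vecI)
      fix i assume "i < dim_vec (vec N (\<lambda>i. b $ i - Phi A (of_nat i + x)))"
      then have i: "i < N" by simp
      have "Phi A ((of_nat i + x) + of_int (int P)) = Phi A (of_nat i + x)"
        by (rule phi_int_period[OF perP])
      then show "vec N (\<lambda>i. b $ i - Phi A (of_nat i + (x + real P))) $ i =
           vec N (\<lambda>i. b $ i - Phi A (of_nat i + x)) $ i"
        using i by (simp add: add.assoc)
    qed simp
  next
    fix L' assume H: "0 < L' \<and> (\<forall>x. gfun N a b (x + L') = gfun N a b x)"
    then have L'0: "L' > 0" and perg: "\<And>x. gfun N a b (x + L') = gfun N a b x" by auto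
    have perphi: "\<forall>x. Phi A (x + L') = Phi A x"
    proof
      fix x
      have "gfun N a b (x + L') $ 0 = gfun N a b x $ 0" using perg by simp
      then show "Phi A (x + L') = Phi A x" unfolding gfun_eq' using N by simp
    qed
    have int: "L' = of_int \<lfloor>L'\<rfloor>"
    proof (rule ccontr)
      assume "L' \<noteq> of_int \<lfloor>L'\<rfloor>"
      then have "A j = A 0" for j using phi_nonint_period[OF perphi _ pN N] by blast
      then show False using nonconst by blast
    qed
    define p where "p = nat \<lfloor>L'\<rfloor>"
    have f0: "\<lfloor>L'\<rfloor> \<ge> 0" using L'0 by simp
    have "real p = of_int \<lfloor>L'\<rfloor>" unfolding p_def using f0 by simp
    then have Lp: "L' = real p" using int by simp
    have p0: "p > 0" using Lp L'0 by simp
    have perA: "\<forall>j. A (j + int p) = A j"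
    proof
      fix j
      have "Phi A (of_int j + L') = Phi A (of_int j)" using perphi by blast
      moreover have "of_int j + L' = of_int (j + int p)" using Lp by simp
      ultimately show "A (j + int p) = A j" using phi_int[of A] by metis
    qed
    have "\<forall>k\<in>SS N A. N dvd p * k"
      using period_imp[OF N pN perA] by (simp add: mult.commute)
    then have "N dvd Gcd ((*) p ` SS N A)" by (intro Gcd_greatest) auto
    also have "Gcd ((*) p ` SS N A) = p * G" unfolding G_def Gcd_mult by simp
    finally have "G * P dvd G * p" using NGP by simp
    then have "P dvd p" using G0 by simp
    then have "P \<le> p" using p0 by (simp add: dvd_imp_le)
    then show "real P \<le> L'" using Lp by simp
  qed
qed


end
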